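(* Let $b\ge0$ be an integer and let $t$ be a join node of a rooted nice tree decomposition of the Tanner graph $G$ with children $t_1,t_2$ ($B_t=B_{t_1}=B_{t_2}$). For $I\subseteq B_t^c$, $Q\subseteq B_t^v$, $d\in\{0,\dots,b\}$ let $$F_t(I,Q,d)=\min\{f_{t_1}(I_1,Q,d_1)+f_{t_2}(I_2,Q,d_2)-|Q|\},\qquad G_t(I,Q,d)=\sum g_{t_1}(I_1,Q,d_1)\,g_{t_2}(I_2,Q,d_2),$$ the minimum taken over all $(I_1,I_2,d_1,d_2)$ with $I_1,I_2\subseteq B_t^c$, $d_1,d_2\ge0$ integers, $I=I_1\oplus I_2\oplus\Gamma_o(G_t[Q\cup B_t^c])$ and $d=d_1+d_2$, and the sum over those tuples attaining the minimum. Then: if $Q\ne\emptyset$, $f_t(I,Q,d)=F_t(I,Q,d)$ and $g_t(I,Q,d)=G_t(I,Q,d)$; if $Q=\emptyset$, $f_t(I,Q,d)=\min\{F_t(I,Q,d),f_{t_1}(I,Q,d),f_{t_2}(I,Q,d)\}$ and $$g_t(I,Q,d)=\mathbb 1_{f_t=F_t}G_t(I,Q,d)+\mathbb 1_{f_t=f_{t_1}}g_{t_1}(I,Q,d)+\mathbb 1_{f_t=f_{t_2}}g_{t_2}(I,Q,d),$$ all functions evaluated at $(I,Q,d)$, where $\mathbb 1_{x=y}$ is $1$ if $x=y$ and $0$ otherwise (whenever the minimum is finite).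
   Context: $G=(\mathcal L\cup\mathcal R,E)$ is a Tanner graph (bipartite, variable nodes $\mathcal L$, check nodes $\mathcal R$). For a subgraph $H$ of $G$ and $S\subseteq\mathcal L$ in $H$, $H[S]$ is the subgraph of $H$ induced by $S$ together with its neighbours in $H$; for $L\subseteq\mathcal L$, $R\subseteq\mathcal R$, $H[L\cup R]$ is the subgraph of $H$ induced on the vertex set $L\cup R$. $\Gamma_o(\cdot)$ is the set of odd-degree check nodes in the indicated subgraph; $\oplus$ is symmetric difference. A trapping set is a nonempty subset of $\mathcal L$. A rooted nice tree decomposition $(T,(B_t))$ is a rooted tree decomposition (every vertex and edge lies in some bag; bags containing a given vertex form a connected subtree) where every node has at most two children, root and leaves have empty bags, a node with two children (join node) has the same bag as each child, and a node $t$ with one child $t'$ has $B_t=B_{t'}\cup\{v\}$ or $B_t=B_{t'}\setminus\{v\}$. For a node $t$: $B_t^c=B_t\cap\mathcal R$, $B_t^v=B_t\cap\mathcal L$; $G_t$ is the subgraph of $G$ induced on the union of the bags of all descendants of $t$ (including $t$); $\mathcal L(G_t)$ is its set of variable nodes. For $I\subseteq B_t^c$, $Q\subseteq B_t^v$ and an integer $d\ge0$, a trapping set $S$ has parameters $(I,Q,d)$ in $G_t$ if $S\subseteq\mathcal L(G_t)$, $S\cap B_t^v=Q$, $\Gamma_o(G_t[S])\cap B_t^c=I$ and $|\Gamma_o(G_t[S])\setminus I|=d$. $f_t(I,Q,d)$ is the minimum size of a trapping set with parameters $(I,Q,d)$ in $G_t$ ($+\infty$ if none), and $g_t(I,Q,d)$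 is the number of such trapping sets of size $f_t(I,Q,d)$ ($0$ if none). *)

theory Defs
  imports Main "HOL-Library.Extended_Nat"
begin

text \<open>Tanner graph: variable nodes L, check nodes R, edges E as pairs (variable, check).\<close>
definition tanner_graph :: "'v set \<Rightarrow> 'v set \<Rightarrow> ('v \<times> 'v) set \<Rightarrow> bool" where
  "tanner_graph L R E \<longleftrightarrow> finite L \<and> finite R \<and> L \<inter> R = {} \<and> E \<subseteq> L \<times> R"

type_synonym 'v graph = "'v set \<times> ('v \<times> 'v) set"

definition symdiff :: "'a set \<Rightarrow> 'a set \<Rightarrow> 'a set" where
  "symdiff A B = (A - B) \<union> (B - A)"

definition induced_on :: "'v graph \<Rightarrow> 'v set \<Rightarrow> 'v graph" where
  "induced_on H X = (fst H \<inter> X, snd H \<inter> (X \<times> X))"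

definition var_induced :: "'v graph \<Rightarrow> 'v set \<Rightarrow> 'v graph" where
  "var_induced H S = induced_on H (S \<union> {c. \<exists>v\<in>S. (v, c) \<in> snd H})"

definition odd_checks :: "'v set \<Rightarrow> 'v graph \<Rightarrow> 'v set" where
  "odd_checks R H = {c \<in> fst H \<inter> R. odd (card {v. (v, c) \<in> snd H})}"

definition child_rel :: "('n \<Rightarrow> 'n set) \<Rightarrow> ('n \<times> 'n) set" where
  "child_rel ch = {(x, y). y \<in> ch x}"

definition descendants :: "('n \<Rightarrow> 'n set) \<Rightarrow> 'n \<Rightarrow> 'n set" where
  "descendants ch t = {s. (t, s) \<in> (child_rel ch)\<^sup>*}"

definition rooted_tree :: "'n set \<Rightarrow> ('n \<Rightarrow> 'n set) \<Rightarrow> 'n \<Rightarrow> bool" where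
  "rooted_tree N ch r \<longleftrightarrow> finite N \<and> r \<in> N \<and> (\<forall>t\<in>N. ch t \<subseteq> N) \<and> (\<forall>t\<in>N. r \<notin> ch t)
     \<and> (\<forall>s\<in>N. s \<noteq> r \<longrightarrow> (\<exists>!t. t \<in> N \<and> s \<in> ch t))
     \<and> (\<forall>s\<in>N. (r, s) \<in> (child_rel ch)\<^sup>*)"

definition tree_connected :: "('n \<Rightarrow> 'n set) \<Rightarrow> 'n set \<Rightarrow> bool" where
  "tree_connected ch X \<longleftrightarrow>
     (\<forall>s\<in>X. \<forall>t\<in>X. (s, t) \<in> {(a, b). a \<in> X \<and> b \<in> X \<and> (b \<in> ch a \<or> a \<in> ch b)}\<^sup>*)"

definition tree_decomp :: "'v set \<Rightarrow> 'v set \<Rightarrow> ('v \<times> 'v) set \<Rightarrow> 'n set \<Rightarrow> ('n \<Rightarrow> 'n set)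
     \<Rightarrow> ('n \<Rightarrow> 'v set) \<Rightarrow> bool" where
  "tree_decomp L R E N ch B \<longleftrightarrow>
     (\<forall>t\<in>N. B t \<subseteq> L \<union> R)
     \<and> (\<forall>x\<in>L \<union> R. \<exists>t\<in>N. x \<in> B t)
     \<and> (\<forall>(u, w)\<in>E. \<exists>t\<in>N. u \<in> B t \<and> w \<in> B t)
     \<and> (\<forall>x\<in>L \<union> R. tree_connected ch {t \<in> N. x \<in> B t})"

definition nice_tree_decomp :: "'v set \<Rightarrow> 'v set \<Rightarrow> ('v \<times> 'v) set \<Rightarrow> 'n set \<Rightarrow> ('n \<Rightarrow> 'n set)
     \<Rightarrow> 'n \<Rightarrow> ('n \<Rightarrow> 'v set) \<Rightarrow> bool" where
  "nice_tree_decomp L R E N ch r B \<longleftrightarrow>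
     rooted_tree N ch r \<and> tree_decomp L R E N ch B \<and> B r = {}
     \<and> (\<forall>t\<in>N. card (ch t) \<le> 2
          \<and> (ch t = {} \<longrightarrow> B t = {})
          \<and> (card (ch t) = 2 \<longrightarrow> (\<forall>s\<in>ch t. B s = B t))
          \<and> (\<forall>t'. ch t = {t'} \<longrightarrow> (\<exists>v. B t = B t' \<union> {v} \<or> B t = B t' - {v})))"

definition Gt :: "('v \<times> 'v) set \<Rightarrow> ('n \<Rightarrow> 'n set) \<Rightarrow> ('n \<Rightarrow> 'v set) \<Rightarrow> 'n \<Rightarrow> 'v graph" where
  "Gt E ch B t = (let V = \<Union>(B ` descendants ch t) in (V, E \<inter> (V \<times> V)))"

definition has_params :: "'v set \<Rightarrow> 'v set \<Rightarrow> ('v \<times> 'v) set \<Rightarrow> ('n \<Rightarrow> 'n set) \<Rightarrow> ('n \<Rightarrow> 'v set)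
     \<Rightarrow> 'n \<Rightarrow> 'v set \<Rightarrow> 'v set \<Rightarrow> nat \<Rightarrow> 'v set \<Rightarrow> bool" where
  "has_params L R E ch B t I Q d S \<longleftrightarrow>
     S \<noteq> {} \<and> S \<subseteq> fst (Gt E ch B t) \<inter> L \<and> S \<inter> (B t \<inter> L) = Q
     \<and> odd_checks R (var_induced (Gt E ch B t) S) \<inter> (B t \<inter> R) = I
     \<and> card (odd_checks R (var_induced (Gt E ch B t) S) - I) = d"

definition ft :: "'v set \<Rightarrow> 'v set \<Rightarrow> ('v \<times> 'v) set \<Rightarrow> ('n \<Rightarrow> 'n set) \<Rightarrow> ('n \<Rightarrow> 'v set)
     \<Rightarrow> 'n \<Rightarrow> 'v set \<Rightarrow> 'v set \<Rightarrow> nat \<Rightarrow> enat" where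
  "ft L R E ch B t I Q d = (INF S \<in> {S. has_params L R E ch B t I Q d S}. enat (card S))"

definition gt :: "'v set \<Rightarrow> 'v set \<Rightarrow> ('v \<times> 'v) set \<Rightarrow> ('n \<Rightarrow> 'n set) \<Rightarrow> ('n \<Rightarrow> 'v set)
     \<Rightarrow> 'n \<Rightarrow> 'v set \<Rightarrow> 'v set \<Rightarrow> nat \<Rightarrow> nat" where
  "gt L R E ch B t I Q d =
     card {S. has_params L R E ch B t I Q d S \<and> enat (card S) = ft L R E ch B t I Q d}"

definition join_tuples :: "'v set \<Rightarrow> ('v \<times> 'v) set \<Rightarrow> ('n \<Rightarrow> 'n set) \<Rightarrow> ('n \<Rightarrow> 'v set)
     \<Rightarrow> 'n \<Rightarrow> 'v set \<Rightarrow> 'v set \<Rightarrow> nat \<Rightarrow> ('v set \<times> 'v set \<times> nat \<times> nat) set" where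
  "join_tuples R E ch B t I Q d = {(I1, I2, d1, d2). I1 \<subseteq> B t \<inter> R \<and> I2 \<subseteq> B t \<inter> R
       \<and> I = symdiff (symdiff I1 I2) (odd_checks R (induced_on (Gt E ch B t) (Q \<union> (B t \<inter> R))))
       \<and> d = d1 + d2}"

definition join_val :: "'v set \<Rightarrow> 'v set \<Rightarrow> ('v \<times> 'v) set \<Rightarrow> ('n \<Rightarrow> 'n set) \<Rightarrow> ('n \<Rightarrow> 'v set)
     \<Rightarrow> 'n \<Rightarrow> 'n \<Rightarrow> 'v set \<Rightarrow> ('v set \<times> 'v set \<times> nat \<times> nat) \<Rightarrow> enat" where
  "join_val L R E ch B t1 t2 Q x = (case x of (I1, I2, d1, d2) \<Rightarrow>
      ft L R E ch B t1 I1 Q d1 + ft L R E ch B t2 I2 Q d2 - enat (card Q))"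

definition Fjoin :: "'v set \<Rightarrow> 'v set \<Rightarrow> ('v \<times> 'v) set \<Rightarrow> ('n \<Rightarrow> 'n set) \<Rightarrow> ('n \<Rightarrow> 'v set)
     \<Rightarrow> 'n \<Rightarrow> 'n \<Rightarrow> 'n \<Rightarrow> 'v set \<Rightarrow> 'v set \<Rightarrow> nat \<Rightarrow> enat" where
  "Fjoin L R E ch B t t1 t2 I Q d =
     (INF x \<in> join_tuples R E ch B t I Q d. join_val L R E ch B t1 t2 Q x)"

definition Gjoin :: "'v set \<Rightarrow> 'v set \<Rightarrow> ('v \<times> 'v) set \<Rightarrow> ('n \<Rightarrow> 'n set) \<Rightarrow> ('n \<Rightarrow> 'v set)
     \<Rightarrow> 'n \<Rightarrow> 'n \<Rightarrow> 'n \<Rightarrow> 'v set \<Rightarrow> 'v set \<Rightarrow> nat \<Rightarrow> nat" where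
  "Gjoin L R E ch B t t1 t2 I Q d =
     (\<Sum>x \<in> {x \<in> join_tuples R E ch B t I Q d.
                join_val L R E ch B t1 t2 Q x = Fjoin L R E ch B t t1 t2 I Q d}.
        (case x of (I1, I2, d1, d2) \<Rightarrow> gt L R E ch B t1 I1 Q d1 * gt L R E ch B t2 I2 Q d2))"

end

theory Submission
  imports Defs
begin

lemma rt_closed:
  assumes rt: "rooted_tree N ch r" and s: "s \<in> N" and p: "(s, s') \<in> (child_rel ch)\<^sup>*"
  shows "s' \<in> N"
  using p
proof (induction rule: rtrancl_induct)
  case base then show ?case using s .
next
  case (step y z) then show ?case using rt unfolding rooted_tree_def child_rel_def by blast
qed

lemma rt_no_cycle:
  assumes rt: "rooted_tree N ch r" and x: "x \<in> N"
  shows "(x, x) \<notin> (child_rel ch)\<^sup>+"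
proof
  assume xx: "(x, x) \<in> (child_rel ch)\<^sup>+"
  define C where "C = {x \<in> N. (x, x) \<in> (child_rel ch)\<^sup>+}"
  have par: "\<exists>p\<in>C. y \<in> ch p" if "y \<in> C" for y
  proof -
    from that have yN: "y \<in> N" and yy: "(y, y) \<in> (child_rel ch)\<^sup>+" unfolding C_def by auto
    from tranclD2[OF yy] obtain z where z1: "(y, z) \<in> (child_rel ch)\<^sup>*" and z2: "(z, y) \<in> child_rel ch" by blast
    have zN: "z \<in> N" using rt_closed[OF rt yN z1] .
    have "(z, z) \<in> (child_rel ch)\<^sup>+" using rtrancl_into_trancl2[OF z2 z1] .
    with zN z2 show ?thesis unfolding C_def child_rel_def by auto
  qed
  have notC: "y \<notin> C" if "(r, y) \<in> (child_rel ch)\<^sup>*" for y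
    using that
  proof (induction rule: rtrancl_induct)
    case base
    show ?case
    proof
      assume "r \<in> C"
      then obtain p where "p \<in> C" "r \<in> ch p" using par by blast
      then show False using rt unfolding rooted_tree_def C_def by blast
    qed
  next
    case (step y z)
    have rN: "r \<in> N" using rt unfolding rooted_tree_def by blast
    have yN: "y \<in> N" using rt_closed[OF rt rN step.hyps(1)] .
    have zN: "z \<in> N" using rt_closed[OF rt rN] step.hyps rtrancl_into_rtrancl by metis
    have zy: "z \<in> ch y" using step.hyps(2) unfolding child_rel_def by auto
    have zr: "z \<noteq> r" using rt yN zy unfolding rooted_tree_def by blast
    show ?case
    proof
      assume "z \<in> C"
      then obtain p where pC: "p \<in> C" and zp: "z \<in> ch p" using par by blast
      have pN: "p \<in> N" using pC unfolding C_def by auto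
      have "\<exists>!t. t \<in> N \<and> z \<in> ch t" using rt zN zr unfolding rooted_tree_def by blast
      then have "p = y" using pN zp yN zy by blast
      then show False using pC step.IH by simp
    qed
  qed
  have "(r, x) \<in> (child_rel ch)\<^sup>*" using rt x unfolding rooted_tree_def by blast
  then have "x \<notin> C" by (rule notC)
  then show False using x xx unfolding C_def by auto
qed

lemma rt_parent_unique:
  assumes rt: "rooted_tree N ch r" and "p \<in> N" "q \<in> N" "z \<in> ch p" "z \<in> ch q"
  shows "p = q"
proof -
  have zN: "z \<in> N" using rt assms unfolding rooted_tree_def by blast
  have "z \<noteq> r" using rt assms unfolding rooted_tree_def by blast
  then have "\<exists>!t. t \<in> N \<and> z \<in> ch t" using rt zN unfolding rooted_tree_def by blast
  then show ?thesis using assms by blast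
qed

lemma rt_lin:
  assumes rt: "rooted_tree N ch r" and aN: "a \<in> N"
    and ay: "(a, y) \<in> (child_rel ch)\<^sup>*"
  shows "b \<in> N \<Longrightarrow> (b, y) \<in> (child_rel ch)\<^sup>* \<Longrightarrow> (a, b) \<in> (child_rel ch)\<^sup>* \<or> (b, a) \<in> (child_rel ch)\<^sup>*"
  using ay
proof (induction arbitrary: b rule: rtrancl_induct)
  case base then show ?case by simp
next
  case (step p y b)
  from step.prems(2) show ?case
  proof (cases rule: rtranclE)
    case base
    then show ?thesis using step.hyps rtrancl_into_rtrancl by metis
  next
    case (step p')
    have pN: "p \<in> N" using rt_closed[OF rt aN step.hyps(1)] .
    have p'N: "p' \<in> N" using rt_closed[OF rt \<open>b \<in> N\<close> step(1)] .
    have "p = p'" using rt_parent_unique[OF rt pN p'N] step.hyps(2) step(2) unfolding child_rel_def by auto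
    then show ?thesis using step.IH[OF \<open>b \<in> N\<close>] step(1) by simp
  qed
qed

lemma rt_desc_disjoint:
  assumes rt: "rooted_tree N ch r" and tN: "t \<in> N" and ch: "ch t = {t1, t2}" and ne: "t1 \<noteq> t2"
  shows "descendants ch t1 \<inter> descendants ch t2 = {}"
proof (rule ccontr)
  assume "descendants ch t1 \<inter> descendants ch t2 \<noteq> {}"
  then obtain w where w1: "(t1, w) \<in> (child_rel ch)\<^sup>*" and w2: "(t2, w) \<in> (child_rel ch)\<^sup>*"
    unfolding descendants_def by auto
  have t1N: "t1 \<in> N" and t2N: "t2 \<in> N" using rt tN ch unfolding rooted_tree_def by auto
  have key: "False" if A: "(a, b) \<in> (child_rel ch)\<^sup>*" "a \<noteq> b" "a \<in> ch t" "b \<in> ch t" "a \<in> N" for a b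
  proof -
    from A(1) obtain p where p1: "(a, p) \<in> (child_rel ch)\<^sup>*" and p2: "(p, b) \<in> child_rel ch"
      using A(2) by (cases rule: rtranclE) auto
    have pN: "p \<in> N" using rt_closed[OF rt A(5) p1] .
    have "p = t" using rt_parent_unique[OF rt pN tN] p2 A(4) unfolding child_rel_def by auto
    then have "(a, t) \<in> (child_rel ch)\<^sup>*" using p1 by simp
    moreover have "(t, a) \<in> child_rel ch" using A(3) unfolding child_rel_def by auto
    ultimately have "(t, t) \<in> (child_rel ch)\<^sup>+" by (meson rtrancl_into_trancl2)
    then show False using rt_no_cycle[OF rt tN] by simp
  qed
  from rt_lin[OF rt t1N w1 t2N w2] show False
    using key[of t1 t2] key[of t2 t1] ne ch t1N t2N by auto
qed

lemma rt_desc_join: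
  assumes "ch t = {t1, t2}"
  shows "descendants ch t = {t} \<union> descendants ch t1 \<union> descendants ch t2"
proof -
  have "s \<in> {t} \<union> descendants ch t1 \<union> descendants ch t2" if "(t, s) \<in> (child_rel ch)\<^sup>*" for s
    using that
    by (cases rule: converse_rtranclE) (use assms in \<open>auto simp: descendants_def child_rel_def\<close>)
  moreover have "(t, t1) \<in> child_rel ch" "(t, t2) \<in> child_rel ch" using assms unfolding child_rel_def by auto
  ultimately show ?thesis unfolding descendants_def
    by (auto intro: converse_rtrancl_into_rtrancl)
qed

lemma rt_not_anc:
  assumes rt: "rooted_tree N ch r" and tN: "t \<in> N" and t1: "t1 \<in> ch t"
  shows "t \<notin> descendants ch t1"
proof
  assume "t \<in> descendants ch t1"
  then have "(t1, t) \<in> (child_rel ch)\<^sup>*" unfolding descendants_def by auto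
  moreover have "(t, t1) \<in> child_rel ch" using t1 unfolding child_rel_def by auto
  ultimately have "(t, t) \<in> (child_rel ch)\<^sup>+" by (meson rtrancl_into_trancl2)
  then show False using rt_no_cycle[OF rt tN] by simp
qed

lemma rt_crossing:
  assumes rt: "rooted_tree N ch r" and tN: "t \<in> N" and t1: "t1 \<in> ch t"
    and conn: "tree_connected ch X" and XN: "X \<subseteq> N"
    and u: "u \<in> X" "u \<in> descendants ch t1" and w: "w \<in> X" "w \<notin> descendants ch t1"
  shows "t \<in> X"
proof -
  let ?S = "{(a, b). a \<in> X \<and> b \<in> X \<and> (b \<in> ch a \<or> a \<in> ch b)}"
  have path: "(u, w) \<in> ?S\<^sup>*" using conn u w unfolding tree_connected_def by blast
  have t1N: "t1 \<in> N" using rt tN t1 unfolding rooted_tree_def by auto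
  have "y \<in> descendants ch t1 \<or> t \<in> X" if "(u, y) \<in> ?S\<^sup>*" for y
    using that
  proof (induction rule: rtrancl_induct)
    case base then show ?case using u by simp
  next
    case (step a b)
    show ?case
    proof (cases "t \<in> X")
      case True then show ?thesis by simp
    next
      case False
      then have aD: "a \<in> descendants ch t1" using step.IH by simp
      have abX: "a \<in> X" "b \<in> X" using step.hyps(2) by auto
      have aN: "a \<in> N" "b \<in> N" using abX XN by auto
      from step.hyps(2) have "b \<in> ch a \<or> a \<in> ch b" by auto
      then show ?thesis
      proof
        assume "b \<in> ch a"
        then show ?thesis using aD unfolding descendants_def child_rel_def
          by (auto intro: rtrancl_into_rtrancl)
      next
        assume ab: "a \<in> ch b"
        show ?thesis
        proof (cases "a = t1")
          case True
          then have "b = t" using rt_parent_unique[OF rt aN(2) tN] ab t1 by auto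
          then show ?thesis using abX by simp
        next
          case False
          from aD have "(t1, a) \<in> (child_rel ch)\<^sup>*" unfolding descendants_def by auto
          then obtain p where p1: "(t1, p) \<in> (child_rel ch)\<^sup>*" and p2: "(p, a) \<in> child_rel ch"
            using False by (cases rule: rtranclE) auto
          have pN: "p \<in> N" using rt_closed[OF rt t1N p1] .
          have "p = b" using rt_parent_unique[OF rt pN aN(2)] p2 ab unfolding child_rel_def by auto
          then show ?thesis using p1 unfolding descendants_def by auto
        qed
      qed
    qed
  qed
  then show ?thesis using path w by blast
qed

definition Vt :: "('n \<Rightarrow> 'n set) \<Rightarrow> ('n \<Rightarrow> 'v set) \<Rightarrow> 'n \<Rightarrow> 'v set" where
  "Vt ch B s = \<Union>(B ` descendants ch s)"

definition OC :: "'v set \<Rightarrow> ('v \<times> 'v) set \<Rightarrow> 'v set \<Rightarrow> 'v set \<Rightarrow> 'v set" where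
  "OC R E V S = {c \<in> V \<inter> R. odd (card {v \<in> S. (v, c) \<in> E})}"

lemma Gt_eq: "Gt E ch B s = (Vt ch B s, E \<inter> (Vt ch B s \<times> Vt ch B s))"
  unfolding Gt_def Vt_def Let_def by simp

lemma odd_checks_var:
  assumes tg: "tanner_graph L R E" and S: "S \<subseteq> V \<inter> L"
  shows "odd_checks R (var_induced (V, E \<inter> (V \<times> V)) S) = OC R E V S"
proof -
  have EL: "E \<subseteq> L \<times> R" "L \<inter> R = {}" using tg unfolding tanner_graph_def by auto
  let ?N = "{c. \<exists>v\<in>S. (v, c) \<in> E \<inter> (V \<times> V)}"
  have eq: "{v. (v, c) \<in> E \<inter> (V \<times> V) \<inter> ((S \<union> ?N) \<times> (S \<union> ?N))} = {v \<in> S. (v, c) \<in> E}"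
    if c: "c \<in> V" for c
  proof -
    have "v \<in> S" if "(v, c) \<in> E" "v \<in> S \<union> ?N" for v
      using that EL by blast
    then show ?thesis using c S by blast
  qed
  have "c \<in> ?N" if "c \<in> V" "odd (card {v \<in> S. (v, c) \<in> E})" for c
  proof -
    from that have "{v \<in> S. (v, c) \<in> E} \<noteq> {}" by (metis card.empty even_zero)
    then show ?thesis using that S by blast
  qed
  note ci = this
  show ?thesis
  proof (rule set_eqI)
    fix c
    have SR: "c \<in> S \<Longrightarrow> c \<notin> R" using S EL by blast
    show "c \<in> odd_checks R (var_induced (V, E \<inter> (V \<times> V)) S) \<longleftrightarrow> c \<in> OC R E V S"
    proof
      assume "c \<in> odd_checks R (var_induced (V, E \<inter> (V \<times> V)) S)"
      then have c: "c \<in> V" "c \<in> R" "odd (card {v. (v, c) \<in> E \<inter> (V \<times> V) \<inter> ((S \<union> ?N) \<times> (S \<union> ?N))})"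
        unfolding odd_checks_def var_induced_def induced_on_def by auto
      then show "c \<in> OC R E V S" using eq[OF c(1)] unfolding OC_def by simp
    next
      assume "c \<in> OC R E V S"
      then have c: "c \<in> V" "c \<in> R" "odd (card {v \<in> S. (v, c) \<in> E})" unfolding OC_def by auto
      have "c \<in> ?N" using ci c by blast
      then show "c \<in> odd_checks R (var_induced (V, E \<inter> (V \<times> V)) S)"
        unfolding odd_checks_def var_induced_def induced_on_def using c eq[OF c(1)]
        by simp
    qed
  qed
qed

lemma odd_checks_Q:
  assumes tg: "tanner_graph L R E" and Q: "Q \<subseteq> Bt \<inter> L" and BV: "Bt \<subseteq> V"
  shows "odd_checks R (induced_on (V, E \<inter> (V \<times> V)) (Q \<union> (Bt \<inter> R))) = OC R E (Bt \<inter> R) Q"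
proof -
  have EL: "E \<subseteq> L \<times> R" "L \<inter> R = {}" using tg unfolding tanner_graph_def by auto
  have eq: "{v. (v, c) \<in> E \<inter> (V \<times> V) \<inter> ((Q \<union> (Bt \<inter> R)) \<times> (Q \<union> (Bt \<inter> R)))} = {v \<in> Q. (v, c) \<in> E}"
    if c: "c \<in> Bt \<inter> R" for c
    using c EL Q BV by blast
  have "V \<inter> (Q \<union> Bt \<inter> R) \<inter> R = Bt \<inter> R" using EL Q BV by blast
  then show ?thesis
    unfolding odd_checks_def induced_on_def OC_def
    using eq by auto
qed

lemma has_params_alt:
  assumes tg: "tanner_graph L R E"
  shows "has_params L R E ch B s I Q d S \<longleftrightarrow>
    S \<noteq> {} \<and> S \<subseteq> Vt ch B s \<inter> L \<and> S \<inter> (B s \<inter> L) = Q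
     \<and> OC R E (Vt ch B s) S \<inter> (B s \<inter> R) = I \<and> card (OC R E (Vt ch B s) S - I) = d"
  using odd_checks_var[OF tg, of S "Vt ch B s"]
  unfolding has_params_def Gt_eq by auto

definition mm :: "'a set set \<Rightarrow> enat" where
  "mm P = (INF S \<in> P. enat (card S))"

definition cn :: "'a set set \<Rightarrow> nat" where
  "cn P = card {S. S \<in> P \<and> enat (card S) = mm P}"

lemma mm_empty[simp]: "mm {} = \<infinity>"
  unfolding mm_def by (simp add: top_enat_def)

lemma mm_le: "S \<in> P \<Longrightarrow> mm P \<le> enat (card S)"
  unfolding mm_def by (rule INF_lower)

lemma mm_attained: assumes "P \<noteq> {}" shows "\<exists>S\<in>P. mm P = enat (card S)"
proof -
  have "Inf ((\<lambda>S. enat (card S)) ` P) \<in> (\<lambda>S. enat (card S)) ` P"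
    unfolding Inf_enat_def using assms by (auto intro: LeastI)
  then show ?thesis unfolding mm_def by auto
qed

lemma mm_union: "mm (A \<union> B) = min (mm A) (mm B)"
  unfolding mm_def by (simp add: INF_union inf_min)

lemma cn_union:
  assumes fA: "finite A" and fB: "finite B" and dis: "A \<inter> B = {}"
  shows "cn (A \<union> B) = (if mm (A \<union> B) = mm A then cn A else 0) + (if mm (A \<union> B) = mm B then cn B else 0)"
proof -
  let ?m = "mm (A \<union> B)"
  have split: "{S. S \<in> A \<union> B \<and> enat (card S) = ?m} =
      {S. S \<in> A \<and> enat (card S) = ?m} \<union> {S. S \<in> B \<and> enat (card S) = ?m}" by auto
  have cA: "card {S. S \<in> A \<and> enat (card S) = ?m} = (if ?m = mm A then cn A else 0)"
  proof (cases "?m = mm A")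
    case True then show ?thesis unfolding cn_def by simp
  next
    case False
    then have "?m < mm A" unfolding mm_union by (auto simp: min_def split: if_splits)
    then have "{S. S \<in> A \<and> enat (card S) = ?m} = {}" using mm_le[of _ A] by (metis (mono_tags, lifting) Collect_empty_eq leD)
    then show ?thesis using False by (metis card.empty)
  qed
  have cB: "card {S. S \<in> B \<and> enat (card S) = ?m} = (if ?m = mm B then cn B else 0)"
  proof (cases "?m = mm B")
    case True then show ?thesis unfolding cn_def by simp
  next
    case False
    then have "?m < mm B" unfolding mm_union by (auto simp: min_def split: if_splits)
    then have "{S. S \<in> B \<and> enat (card S) = ?m} = {}" using mm_le[of _ B] by (metis (mono_tags, lifting) Collect_empty_eq leD)
    then show ?thesis using False by (metis card.empty)
  qed
  have "cn (A \<union> B) = card {S. S \<in> A \<and> enat (card S) = ?m} + card {S. S \<in> B \<and> enat (card S) = ?m}"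
    unfolding cn_def split
    by (rule card_Un_disjoint) (use fA fB dis in auto)
  then show ?thesis using cA cB by simp
qed

lemma cn_union3:
  assumes "finite A" "finite B" "finite C" "A \<inter> B = {}" "A \<inter> C = {}" "B \<inter> C = {}"
  shows "mm (A \<union> B \<union> C) = min (mm A) (min (mm B) (mm C))"
    and "cn (A \<union> B \<union> C) = (if mm (A \<union> B \<union> C) = mm A then cn A else 0)
       + (if mm (A \<union> B \<union> C) = mm B then cn B else 0) + (if mm (A \<union> B \<union> C) = mm C then cn C else 0)"
proof -
  show "mm (A \<union> B \<union> C) = min (mm A) (min (mm B) (mm C))" by (simp add: mm_union min.assoc)
  have 1: "cn (A \<union> B \<union> C) = (if mm (A \<union> B \<union> C) = mm (A \<union> B) then cn (A \<union> B) else 0)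
     + (if mm (A \<union> B \<union> C) = mm C then cn C else 0)"
    by (rule cn_union) (use assms in auto)
  have 2: "cn (A \<union> B) = (if mm (A \<union> B) = mm A then cn A else 0) + (if mm (A \<union> B) = mm B then cn B else 0)"
    by (rule cn_union) (use assms in auto)
  show "cn (A \<union> B \<union> C) = (if mm (A \<union> B \<union> C) = mm A then cn A else 0)
       + (if mm (A \<union> B \<union> C) = mm B then cn B else 0) + (if mm (A \<union> B \<union> C) = mm C then cn C else 0)"
    unfolding 1 2 mm_union by (auto simp: min_def)
qed

lemma enat_diff_mono: "(a::enat) \<le> b \<Longrightarrow> a - enat k \<le> b - enat k"
  by (cases a; cases b) auto

lemma join_abstract:
  fixes T :: "'x set" and P1 P2 :: "'x \<Rightarrow> 'a set set" and k :: nat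
  assumes fT: "finite T" and fP: "\<And>x. x \<in> T \<Longrightarrow> finite (P1 x) \<and> finite (P2 x)"
    and cadd: "\<And>x S1 S2. x \<in> T \<Longrightarrow> S1 \<in> P1 x \<Longrightarrow> S2 \<in> P2 x \<Longrightarrow> card (S1 \<union> S2) + k = card S1 + card S2"
    and inj: "\<And>x y S1 S2 S1' S2'. x \<in> T \<Longrightarrow> y \<in> T \<Longrightarrow> S1 \<in> P1 x \<Longrightarrow> S2 \<in> P2 x \<Longrightarrow> S1' \<in> P1 y
       \<Longrightarrow> S2' \<in> P2 y \<Longrightarrow> S1 \<union> S2 = S1' \<union> S2' \<Longrightarrow> x = y \<and> S1 = S1' \<and> S2 = S2'"
    and J: "J = (\<Union>x\<in>T. (\<lambda>(A, B). A \<union> B) ` (P1 x \<times> P2 x))"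
    and jv: "\<And>x. jv x = mm (P1 x) + mm (P2 x) - enat k"
  shows "mm J = (INF x\<in>T. jv x)"
    and "cn J = (\<Sum>x\<in>{x \<in> T. jv x = (INF x\<in>T. jv x)}. cn (P1 x) * cn (P2 x))"
proof -
  let ?F = "INF x\<in>T. jv x"
  have jv_le: "jv x \<le> enat (card (S1 \<union> S2))" if "x \<in> T" "S1 \<in> P1 x" "S2 \<in> P2 x" for x S1 S2
  proof -
    have "jv x \<le> enat (card S1) + enat (card S2) - enat k"
      unfolding jv by (intro enat_diff_mono add_mono mm_le that)
    also have "\<dots> = enat (card (S1 \<union> S2))" using cadd[OF that] by simp
    finally show ?thesis .
  qed
  have mins: "\<exists>S1\<in>P1 x. \<exists>S2\<in>P2 x. mm (P1 x) = enat (card S1) \<and> mm (P2 x) = enat (card S2)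
       \<and> jv x = enat (card (S1 \<union> S2))" if "x \<in> T" "jv x \<noteq> \<infinity>" for x
  proof -
    have "P1 x \<noteq> {}" using that(2) unfolding jv by auto
    moreover have "P2 x \<noteq> {}" using that(2) unfolding jv by auto
    ultimately obtain S1 S2 where S: "S1 \<in> P1 x" "S2 \<in> P2 x" "mm (P1 x) = enat (card S1)" "mm (P2 x) = enat (card S2)"
      using mm_attained by metis
    then show ?thesis using cadd[OF that(1) S(1,2)] unfolding jv by (intro bexI conjI) auto
  qed
  show m: "mm J = ?F"
  proof (rule antisym)
    show "mm J \<le> ?F"
    proof (rule INF_greatest)
      fix x assume x: "x \<in> T"
      show "mm J \<le> jv x"
      proof (cases "jv x = \<infinity>")
        case True then show ?thesis by simp
      next
        case False
        then obtain S1 S2 where "S1 \<in> P1 x" "S2 \<in> P2 x" "jv x = enat (card (S1 \<union> S2))"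
          using mins[OF x] by blast
        moreover have "S1 \<union> S2 \<in> J" using x calculation unfolding J by blast
        ultimately show ?thesis using mm_le by metis
      qed
    qed
  next
    show "?F \<le> mm J"
      unfolding mm_def
    proof (rule INF_greatest)
      fix S assume "S \<in> J"
      then obtain x S1 S2 where x: "x \<in> T" "S1 \<in> P1 x" "S2 \<in> P2 x" "S = S1 \<union> S2" unfolding J by auto
      have "?F \<le> jv x" using x(1) by (rule INF_lower)
      also have "\<dots> \<le> enat (card S)" using jv_le[OF x(1-3)] x(4) by simp
      finally show "?F \<le> enat (card S)" .
    qed
  qed
  define Tm where "Tm = {x \<in> T. jv x = ?F}"
  define M1 where "M1 x = {S. S \<in> P1 x \<and> enat (card S) = mm (P1 x)}" for x
  define M2 where "M2 x = {S. S \<in> P2 x \<and> enat (card S) = mm (P2 x)}" for x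
  let ?U = "\<lambda>(A, B). A \<union> B"
  have seteq: "{S. S \<in> J \<and> enat (card S) = mm J} = (\<Union>x\<in>Tm. ?U ` (M1 x \<times> M2 x))"
  proof (rule set_eqI, rule iffI)
    fix S assume "S \<in> {S. S \<in> J \<and> enat (card S) = mm J}"
    then have SJ: "S \<in> J" and cS: "enat (card S) = mm J" by auto
    then obtain x S1 S2 where x: "x \<in> T" "S1 \<in> P1 x" "S2 \<in> P2 x" "S = S1 \<union> S2" unfolding J by auto
    have "?F \<le> jv x" using x(1) by (rule INF_lower)
    moreover have "jv x \<le> enat (card S)" using jv_le[OF x(1-3)] x(4) by simp
    ultimately have jx: "jv x = enat (card S)" using cS m by simp
    then obtain S1' S2' where S': "S1' \<in> P1 x" "S2' \<in> P2 x" "mm (P1 x) = enat (card S1')" "mm (P2 x) = enat (card S2')"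
       "jv x = enat (card (S1' \<union> S2'))"
      using mins[OF x(1)] by auto
    have l1: "card S1' \<le> card S1" using mm_le[OF x(2)] S'(3) by simp
    have l2: "card S2' \<le> card S2" using mm_le[OF x(3)] S'(4) by simp
    have "card (S1' \<union> S2') = card S" using S'(5) jx by simp
    then have "card S1' + card S2' = card S1 + card S2"
      using cadd[OF x(1) S'(1,2)] cadd[OF x(1-3)] x(4) by simp
    then have "card S1' = card S1" "card S2' = card S2" using l1 l2 by auto
    then have "S1 \<in> M1 x" "S2 \<in> M2 x" using x S' unfolding M1_def M2_def by auto
    moreover have "x \<in> Tm" using jx cS m x(1) unfolding Tm_def by simp
    ultimately show "S \<in> (\<Union>x\<in>Tm. ?U ` (M1 x \<times> M2 x))" using x(4) by blast
  next
    fix S assume "S \<in> (\<Union>x\<in>Tm. ?U ` (M1 x \<times> M2 x))"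
    then obtain x S1 S2 where x: "x \<in> Tm" "S1 \<in> M1 x" "S2 \<in> M2 x" "S = S1 \<union> S2" by auto
    have xT: "x \<in> T" and jx: "jv x = ?F" using x(1) unfolding Tm_def by auto
    have S12: "S1 \<in> P1 x" "S2 \<in> P2 x" "enat (card S1) = mm (P1 x)" "enat (card S2) = mm (P2 x)"
      using x(2,3) unfolding M1_def M2_def by auto
    have "jv x = enat (card S)"
      unfolding jv S12(3,4)[symmetric] x(4) using cadd[OF xT S12(1,2)] by simp
    moreover have "S \<in> J" using xT S12 x(4) unfolding J by blast
    ultimately show "S \<in> {S. S \<in> J \<and> enat (card S) = mm J}" using jx m by simp
  qed
  have fTm: "finite Tm" using fT unfolding Tm_def by simp
  have fM: "finite (M1 x)" "finite (M2 x)" if "x \<in> Tm" for x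
    using fP[of x] that unfolding Tm_def M1_def M2_def by auto
  have "cn J = card (\<Union>x\<in>Tm. ?U ` (M1 x \<times> M2 x))" unfolding cn_def seteq ..
  also have "\<dots> = (\<Sum>x\<in>Tm. card (?U ` (M1 x \<times> M2 x)))"
  proof (rule card_UN_disjoint[OF fTm])
    show "\<forall>i\<in>Tm. finite (?U ` (M1 i \<times> M2 i))" using fM by auto
    show "\<forall>i\<in>Tm. \<forall>j\<in>Tm. i \<noteq> j \<longrightarrow> ?U ` (M1 i \<times> M2 i) \<inter> ?U ` (M1 j \<times> M2 j) = {}"
    proof (intro ballI impI)
      fix i j assume ij: "i \<in> Tm" "j \<in> Tm" "i \<noteq> j"
      show "?U ` (M1 i \<times> M2 i) \<inter> ?U ` (M1 j \<times> M2 j) = {}"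
      proof (rule ccontr)
        assume "?U ` (M1 i \<times> M2 i) \<inter> ?U ` (M1 j \<times> M2 j) \<noteq> {}"
        then obtain A B A' B' where AB: "A \<in> M1 i" "B \<in> M2 i" "A' \<in> M1 j" "B' \<in> M2 j" "A \<union> B = A' \<union> B'"
          by auto
        have "i \<in> T" "j \<in> T" using ij unfolding Tm_def by auto
        moreover have "A \<in> P1 i" "B \<in> P2 i" "A' \<in> P1 j" "B' \<in> P2 j" using AB unfolding M1_def M2_def by auto
        ultimately have "i = j" using inj AB(5) by blast
        then show False using ij by simp
      qed
    qed
  qed
  also have "\<dots> = (\<Sum>x\<in>Tm. cn (P1 x) * cn (P2 x))"
  proof (rule sum.cong[OF refl])
    fix x assume x: "x \<in> Tm"
    have xT: "x \<in> T" using x unfolding Tm_def by auto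
    have "inj_on ?U (M1 x \<times> M2 x)"
    proof (rule inj_onI)
      fix p q assume p: "p \<in> M1 x \<times> M2 x" and q: "q \<in> M1 x \<times> M2 x" and e: "?U p = ?U q"
      obtain A B where pAB: "p = (A, B)" by (cases p)
      obtain A' B' where qAB: "q = (A', B')" by (cases q)
      have "A \<in> P1 x" "B \<in> P2 x" "A' \<in> P1 x" "B' \<in> P2 x"
        using p q pAB qAB unfolding M1_def M2_def by auto
      moreover have "A \<union> B = A' \<union> B'" using e pAB qAB by simp
      ultimately have "A = A' \<and> B = B'" using inj[OF xT xT] by blast
      then show "p = q" using pAB qAB by simp
    qed
    then have "card (?U ` (M1 x \<times> M2 x)) = card (M1 x \<times> M2 x)" by (rule card_image)
    also have "\<dots> = card (M1 x) * card (M2 x)" by (rule card_cartesian_product)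
    finally show "card (?U ` (M1 x \<times> M2 x)) = cn (P1 x) * cn (P2 x)"
      unfolding cn_def M1_def M2_def by simp
  qed
  finally show "cn J = (\<Sum>x\<in>{x \<in> T. jv x = ?F}. cn (P1 x) * cn (P2 x))" unfolding Tm_def .
qed

definition hpA :: "'v set \<Rightarrow> 'v set \<Rightarrow> ('v \<times> 'v) set \<Rightarrow> 'v set \<Rightarrow> 'v set \<Rightarrow> 'v set \<Rightarrow> 'v set \<Rightarrow> nat \<Rightarrow> 'v set \<Rightarrow> bool" where
  "hpA L R E V Bt I Q d S \<longleftrightarrow> S \<noteq> {} \<and> S \<subseteq> V \<inter> L \<and> S \<inter> (Bt \<inter> L) = Q
     \<and> OC R E V S \<inter> (Bt \<inter> R) = I \<and> card (OC R E V S - I) = d"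

lemma parity_aux: "(a::nat) + b = n + q \<Longrightarrow> odd n \<longleftrightarrow> ((odd a \<noteq> odd b) \<noteq> odd q)"
  by presburger

lemma OC_sub: "OC R E W S \<subseteq> W \<inter> R" unfolding OC_def by auto

lemma OC_diff: "OC R E W S \<inter> (Bt \<inter> R) = I \<Longrightarrow> OC R E W S - I = OC R E W S - Bt"
  using OC_sub[of R E W S] by blast

lemma OC_empty[simp]: "OC R E W {} = {}" unfolding OC_def by simp

locale jctx =
  fixes L R :: "'v set" and E :: "('v \<times> 'v) set" and V1 V2 Bt :: "'v set"
  assumes EL: "E \<subseteq> L \<times> R" and LR: "L \<inter> R = {}"
    and fin1: "finite V1" and fin2: "finite V2" and cap: "V1 \<inter> V2 = Bt"
    and e1: "\<And>v c. (v, c) \<in> E \<Longrightarrow> c \<in> V1 \<Longrightarrow> c \<notin> Bt \<Longrightarrow> v \<in> V1"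
    and e2: "\<And>v c. (v, c) \<in> E \<Longrightarrow> c \<in> V2 \<Longrightarrow> c \<notin> Bt \<Longrightarrow> v \<in> V2"
begin

lemma decomp:
  assumes S: "S \<subseteq> V1 \<union> V2"
  shows "OC R E (V1 \<union> V2) S \<inter> (Bt \<inter> R) =
      symdiff (symdiff (OC R E V1 (S \<inter> V1) \<inter> (Bt \<inter> R)) (OC R E V2 (S \<inter> V2) \<inter> (Bt \<inter> R)))
              (OC R E (Bt \<inter> R) (S \<inter> Bt))"
    and "OC R E (V1 \<union> V2) S - Bt = (OC R E V1 (S \<inter> V1) - Bt) \<union> (OC R E V2 (S \<inter> V2) - Bt)"
proof -
  have fS: "finite S" using S fin1 fin2 finite_subset by blast
  have par: "odd (card {v \<in> S. (v, c) \<in> E}) \<longleftrightarrow>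
      (odd (card {v \<in> S \<inter> V1. (v, c) \<in> E}) \<noteq> odd (card {v \<in> S \<inter> V2. (v, c) \<in> E}))
        \<noteq> odd (card {v \<in> S \<inter> Bt. (v, c) \<in> E})" for c
  proof -
    let ?A = "{v \<in> S \<inter> V1. (v, c) \<in> E}" and ?B = "{v \<in> S \<inter> V2. (v, c) \<in> E}"
    have u: "{v \<in> S. (v, c) \<in> E} = ?A \<union> ?B" using S by blast
    have i: "{v \<in> S \<inter> Bt. (v, c) \<in> E} = ?A \<inter> ?B" using cap by blast
    have "card ?A + card ?B = card (?A \<union> ?B) + card (?A \<inter> ?B)"
      by (rule card_Un_Int) (use fS in auto)
    then show ?thesis unfolding u i by (rule parity_aux)
  qed
  have Bt1: "Bt \<subseteq> V1" and Bt2: "Bt \<subseteq> V2" using cap by auto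
  show "OC R E (V1 \<union> V2) S \<inter> (Bt \<inter> R) =
      symdiff (symdiff (OC R E V1 (S \<inter> V1) \<inter> (Bt \<inter> R)) (OC R E V2 (S \<inter> V2) \<inter> (Bt \<inter> R)))
              (OC R E (Bt \<inter> R) (S \<inter> Bt))"
  proof (rule set_eqI)
    fix c
    show "c \<in> OC R E (V1 \<union> V2) S \<inter> (Bt \<inter> R) \<longleftrightarrow> c \<in> symdiff (symdiff (OC R E V1 (S \<inter> V1) \<inter> (Bt \<inter> R)) (OC R E V2 (S \<inter> V2) \<inter> (Bt \<inter> R)))
              (OC R E (Bt \<inter> R) (S \<inter> Bt))"
    proof (cases "c \<in> Bt \<inter> R")
      case True
      then have "c \<in> V1" "c \<in> V2" "c \<in> V1 \<union> V2" using Bt1 Bt2 by auto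
      then show ?thesis using par[of c] True unfolding symdiff_def OC_def by auto
    next
      case False then show ?thesis unfolding symdiff_def OC_def by auto
    qed
  qed
  have s1: "{v \<in> S. (v, c) \<in> E} = {v \<in> S \<inter> V1. (v, c) \<in> E}" if "c \<in> V1" "c \<notin> Bt" for c
    using e1 that by blast
  have s2: "{v \<in> S. (v, c) \<in> E} = {v \<in> S \<inter> V2. (v, c) \<in> E}" if "c \<in> V2" "c \<notin> Bt" for c
    using e2 that by blast
  show "OC R E (V1 \<union> V2) S - Bt = (OC R E V1 (S \<inter> V1) - Bt) \<union> (OC R E V2 (S \<inter> V2) - Bt)"
  proof (rule set_eqI)
    fix c
    show "c \<in> OC R E (V1 \<union> V2) S - Bt \<longleftrightarrow> c \<in> (OC R E V1 (S \<inter> V1) - Bt) \<union> (OC R E V2 (S \<inter> V2) - Bt)"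
      unfolding OC_def using s1[of c] s2[of c] by auto
  qed
qed

lemma split_parts:
  assumes h1: "hpA L R E V1 Bt I1 Q d1 S1" and h2: "hpA L R E V2 Bt I2 Q d2 S2"
  shows "(S1 \<union> S2) \<inter> V1 = S1" "(S1 \<union> S2) \<inter> V2 = S2" "S1 \<inter> S2 = Q" "(S1 \<union> S2) \<inter> Bt = Q"
proof -
  have a: "S1 \<subseteq> V1 \<inter> L" "S1 \<inter> (Bt \<inter> L) = Q" using h1 unfolding hpA_def by auto
  have b: "S2 \<subseteq> V2 \<inter> L" "S2 \<inter> (Bt \<inter> L) = Q" using h2 unfolding hpA_def by auto
  show "(S1 \<union> S2) \<inter> V1 = S1" "(S1 \<union> S2) \<inter> V2 = S2" "S1 \<inter> S2 = Q" "(S1 \<union> S2) \<inter> Bt = Q"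
    using a b cap by blast+
qed

definition JT :: "'v set \<Rightarrow> 'v set \<Rightarrow> nat \<Rightarrow> ('v set \<times> 'v set \<times> nat \<times> nat) set" where
  "JT I Q d = {(I1, I2, d1, d2). I1 \<subseteq> Bt \<inter> R \<and> I2 \<subseteq> Bt \<inter> R
       \<and> I = symdiff (symdiff I1 I2) (OC R E (Bt \<inter> R) Q) \<and> d = d1 + d2}"

lemma card_parts:
  assumes S: "S \<subseteq> V1 \<union> V2"
  shows "card (OC R E (V1 \<union> V2) S - Bt) = card (OC R E V1 (S \<inter> V1) - Bt) + card (OC R E V2 (S \<inter> V2) - Bt)"
proof -
  have "finite (OC R E V1 (S \<inter> V1))" "finite (OC R E V2 (S \<inter> V2))"
    using OC_sub fin1 fin2 finite_subset by (metis finite_Int)+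
  moreover have "(OC R E V1 (S \<inter> V1) - Bt) \<inter> (OC R E V2 (S \<inter> V2) - Bt) = {}"
    using OC_sub[of R E V1] OC_sub[of R E V2] cap by blast
  ultimately show ?thesis unfolding decomp(2)[OF S] by (simp add: card_Un_disjoint)
qed

lemma J_char:
  "(\<exists>I1 I2 d1 d2 S1 S2. (I1, I2, d1, d2) \<in> JT I Q d \<and> hpA L R E V1 Bt I1 Q d1 S1
       \<and> hpA L R E V2 Bt I2 Q d2 S2 \<and> S = S1 \<union> S2)
   \<longleftrightarrow> hpA L R E (V1 \<union> V2) Bt I Q d S \<and> S \<inter> V1 \<noteq> {} \<and> S \<inter> V2 \<noteq> {}"
proof
  assume "\<exists>I1 I2 d1 d2 S1 S2. (I1, I2, d1, d2) \<in> JT I Q d \<and> hpA L R E V1 Bt I1 Q d1 S1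
       \<and> hpA L R E V2 Bt I2 Q d2 S2 \<and> S = S1 \<union> S2"
  then obtain I1 I2 d1 d2 S1 S2 where x: "(I1, I2, d1, d2) \<in> JT I Q d" and h1: "hpA L R E V1 Bt I1 Q d1 S1"
    and h2: "hpA L R E V2 Bt I2 Q d2 S2" and SS: "S = S1 \<union> S2" by blast
  note sp = split_parts[OF h1 h2]
  have a: "S1 \<noteq> {}" "S1 \<subseteq> V1 \<inter> L" "OC R E V1 S1 \<inter> (Bt \<inter> R) = I1" "card (OC R E V1 S1 - I1) = d1"
    using h1 unfolding hpA_def by auto
  have b: "S2 \<noteq> {}" "S2 \<subseteq> V2 \<inter> L" "OC R E V2 S2 \<inter> (Bt \<inter> R) = I2" "card (OC R E V2 S2 - I2) = d2"
    using h2 unfolding hpA_def by auto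
  have Ssub: "S \<subseteq> V1 \<union> V2" using a b SS by auto
  have xx: "I = symdiff (symdiff I1 I2) (OC R E (Bt \<inter> R) Q)" "d = d1 + d2" using x unfolding JT_def by auto
  have oc: "OC R E (V1 \<union> V2) S \<inter> (Bt \<inter> R) = I"
    using decomp(1)[OF Ssub] sp a(3) b(3) xx(1) unfolding SS by simp
  have "card (OC R E (V1 \<union> V2) S - I) = d"
    unfolding OC_diff[OF oc] card_parts[OF Ssub] xx(2) using sp a(4) b(4) OC_diff[OF a(3)] OC_diff[OF b(3)]
    unfolding SS by simp
  moreover have "S \<inter> (Bt \<inter> L) = Q" using sp SS a b by blast
  ultimately show "hpA L R E (V1 \<union> V2) Bt I Q d S \<and> S \<inter> V1 \<noteq> {} \<and> S \<inter> V2 \<noteq> {}"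
    unfolding hpA_def using oc a b SS sp by auto
next
  assume h: "hpA L R E (V1 \<union> V2) Bt I Q d S \<and> S \<inter> V1 \<noteq> {} \<and> S \<inter> V2 \<noteq> {}"
  then have hs: "S \<subseteq> (V1 \<union> V2) \<inter> L" "S \<inter> (Bt \<inter> L) = Q" "OC R E (V1 \<union> V2) S \<inter> (Bt \<inter> R) = I"
    "card (OC R E (V1 \<union> V2) S - I) = d" "S \<inter> V1 \<noteq> {}" "S \<inter> V2 \<noteq> {}"
    unfolding hpA_def by auto
  have Ssub: "S \<subseteq> V1 \<union> V2" using hs by auto
  have SBt: "S \<inter> Bt = Q" using hs by blast
  define I1 where "I1 = OC R E V1 (S \<inter> V1) \<inter> (Bt \<inter> R)"
  define I2 where "I2 = OC R E V2 (S \<inter> V2) \<inter> (Bt \<inter> R)"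
  define d1 where "d1 = card (OC R E V1 (S \<inter> V1) - I1)"
  define d2 where "d2 = card (OC R E V2 (S \<inter> V2) - I2)"
  have "d = d1 + d2"
    using hs(4) card_parts[OF Ssub] OC_diff[OF hs(3)] OC_diff[OF I1_def[symmetric]] OC_diff[OF I2_def[symmetric]]
    unfolding d1_def d2_def by simp
  moreover have "I = symdiff (symdiff I1 I2) (OC R E (Bt \<inter> R) Q)"
    using decomp(1)[OF Ssub] hs(3) SBt unfolding I1_def I2_def by simp
  ultimately have "(I1, I2, d1, d2) \<in> JT I Q d" unfolding JT_def I1_def I2_def by auto
  moreover have "hpA L R E V1 Bt I1 Q d1 (S \<inter> V1)"
    unfolding hpA_def I1_def d1_def using hs cap by blast
  moreover have "hpA L R E V2 Bt I2 Q d2 (S \<inter> V2)"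
    unfolding hpA_def I2_def d2_def using hs cap by blast
  moreover have "S = (S \<inter> V1) \<union> (S \<inter> V2)" using Ssub by blast
  ultimately show "\<exists>I1 I2 d1 d2 S1 S2. (I1, I2, d1, d2) \<in> JT I Q d \<and> hpA L R E V1 Bt I1 Q d1 S1
       \<and> hpA L R E V2 Bt I2 Q d2 S2 \<and> S = S1 \<union> S2" by blast
qed

lemma one_side1:
  "hpA L R E V1 Bt I {} d S \<longleftrightarrow> hpA L R E (V1 \<union> V2) Bt I {} d S \<and> S \<inter> V2 = {}"
proof
  assume h: "hpA L R E V1 Bt I {} d S"
  then have hs: "S \<subseteq> V1 \<inter> L" "S \<inter> (Bt \<inter> L) = {}" "OC R E V1 S \<inter> (Bt \<inter> R) = I" "card (OC R E V1 S - I) = d"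
    unfolding hpA_def by auto
  have S2: "S \<inter> V2 = {}" using hs cap by blast
  have Ssub: "S \<subseteq> V1 \<union> V2" using hs by auto
  have S1: "S \<inter> V1 = S" using hs by auto
  have SB: "S \<inter> Bt = {}" using S2 cap by blast
  have oc: "OC R E (V1 \<union> V2) S \<inter> (Bt \<inter> R) = I"
    using decomp(1)[OF Ssub] hs(3) unfolding S1 S2 SB by (simp add: symdiff_def)
  have "card (OC R E (V1 \<union> V2) S - I) = d"
    using OC_diff[OF oc] decomp(2)[OF Ssub] OC_diff[OF hs(3)] hs(4) unfolding S1 S2 by simp
  then show "hpA L R E (V1 \<union> V2) Bt I {} d S \<and> S \<inter> V2 = {}"
    using h oc S2 unfolding hpA_def by auto
next
  assume h: "hpA L R E (V1 \<union> V2) Bt I {} d S \<and> S \<inter> V2 = {}"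
  then have hs: "S \<subseteq> (V1 \<union> V2) \<inter> L" "S \<inter> (Bt \<inter> L) = {}" "OC R E (V1 \<union> V2) S \<inter> (Bt \<inter> R) = I"
     "card (OC R E (V1 \<union> V2) S - I) = d" "S \<inter> V2 = {}" "S \<noteq> {}"
    unfolding hpA_def by auto
  have Ssub: "S \<subseteq> V1 \<union> V2" using hs by auto
  have S1: "S \<inter> V1 = S" using hs by auto
  have SB: "S \<inter> Bt = {}" using hs(5) cap by blast
  have oc: "OC R E V1 S \<inter> (Bt \<inter> R) = I"
    using decomp(1)[OF Ssub] hs(3) unfolding S1 hs(5) SB by (simp add: symdiff_def)
  have "card (OC R E V1 S - I) = d"
    using OC_diff[OF oc] decomp(2)[OF Ssub] OC_diff[OF hs(3)] hs(4) unfolding S1 hs(5) by simp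
  then show "hpA L R E V1 Bt I {} d S" using hs oc unfolding hpA_def by auto
qed

end

lemma jctx_swap: "jctx L R E V1 V2 Bt \<Longrightarrow> jctx L R E V2 V1 Bt"
  unfolding jctx_def by (auto simp: Un_commute Int_commute)

lemma bag_sub: "tree_decomp L R E N ch B \<Longrightarrow> s \<in> N \<Longrightarrow> B s \<subseteq> L \<union> R"
  unfolding tree_decomp_def by blast

lemma desc_N: "rooted_tree N ch r \<Longrightarrow> s \<in> N \<Longrightarrow> descendants ch s \<subseteq> N"
proof
  fix x assume "rooted_tree N ch r" "s \<in> N" "x \<in> descendants ch s"
  then show "x \<in> N" unfolding descendants_def using rt_closed[of N ch r s x] by simp
qed

lemma Vt_sub: "rooted_tree N ch r \<Longrightarrow> tree_decomp L R E N ch B \<Longrightarrow> s \<in> N \<Longrightarrow> Vt ch B s \<subseteq> L \<union> R"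
proof
  fix v assume a: "rooted_tree N ch r" "tree_decomp L R E N ch B" "s \<in> N" "v \<in> Vt ch B s"
  then obtain s' where "s' \<in> descendants ch s" "v \<in> B s'" unfolding Vt_def by auto
  moreover have "s' \<in> N" using desc_N[OF a(1,3)] calculation(1) by auto
  ultimately show "v \<in> L \<union> R" using bag_sub[OF a(2)] by auto
qed

lemma self_desc: "s \<in> descendants ch s" unfolding descendants_def by simp

lemma conn_X: "tree_decomp L R E N ch B \<Longrightarrow> v \<in> L \<union> R \<Longrightarrow> tree_connected ch {s \<in> N. v \<in> B s}"
  unfolding tree_decomp_def by blast

lemma child_edge:
  assumes rt: "rooted_tree N ch r" and td: "tree_decomp L R E N ch B" and tg: "tanner_graph L R E"
    and tN: "t \<in> N" and c: "c \<in> ch t"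
    and e: "(x, y) \<in> E" and y: "y \<in> Vt ch B c" "y \<notin> B t"
  shows "x \<in> Vt ch B c"
proof -
  have cN: "c \<in> N" using rt tN c unfolding rooted_tree_def by auto
  have "\<forall>(u, w)\<in>E. \<exists>t\<in>N. u \<in> B t \<and> w \<in> B t" using td unfolding tree_decomp_def by simp
  then obtain s where s: "s \<in> N" "x \<in> B s" "y \<in> B s" using e by auto
  obtain s1 where s1: "s1 \<in> descendants ch c" "y \<in> B s1" using y(1) unfolding Vt_def by auto
  have yLR: "y \<in> L \<union> R" using tg e unfolding tanner_graph_def by auto
  have s1N: "s1 \<in> N" using desc_N[OF rt cN] s1(1) by auto
  have "s \<in> descendants ch c"
  proof (rule ccontr)
    assume "s \<notin> descendants ch c"
    then have "t \<in> {s \<in> N. y \<in> B s}"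
      using rt_crossing[OF rt tN c conn_X[OF td yLR], of s1 s] s s1 s1N by auto
    then show False using y(2) by auto
  qed
  then show ?thesis using s(2) unfolding Vt_def by auto
qed

lemma child_sep:
  assumes rt: "rooted_tree N ch r" and td: "tree_decomp L R E N ch B"
    and tN: "t \<in> N" and ch: "ch t = {t1, t2}" and ne: "t1 \<noteq> t2"
  shows "Vt ch B t1 \<inter> Vt ch B t2 \<subseteq> B t"
proof
  fix v assume v: "v \<in> Vt ch B t1 \<inter> Vt ch B t2"
  obtain s1 where s1: "s1 \<in> descendants ch t1" "v \<in> B s1" using v unfolding Vt_def by auto
  obtain s2 where s2: "s2 \<in> descendants ch t2" "v \<in> B s2" using v unfolding Vt_def by auto
  have t1N: "t1 \<in> N" "t2 \<in> N" using rt tN ch unfolding rooted_tree_def by auto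
  have sN: "s1 \<in> N" "s2 \<in> N" using desc_N[OF rt t1N(1)] desc_N[OF rt t1N(2)] s1 s2 by auto
  have vLR: "v \<in> L \<union> R" using bag_sub[OF td sN(1)] s1 by auto
  have "s2 \<notin> descendants ch t1" using rt_desc_disjoint[OF rt tN ch ne] s2 by auto
  then have "t \<in> {s \<in> N. v \<in> B s}"
    using rt_crossing[OF rt tN _ conn_X[OF td vLR], of t1 s1 s2] ch s1 s2 sN by auto
  then show "v \<in> B t" by auto
qed

theorem mainTheorem13:
  fixes L R :: "'v set" and E :: "('v \<times> 'v) set"
    and N :: "'n set" and ch :: "'n \<Rightarrow> 'n set" and r :: 'n and B :: "'n \<Rightarrow> 'v set"
    and b d :: nat and t t1 t2 :: 'n and I Q :: "'v set"
  assumes "tanner_graph L R E"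
    and "nice_tree_decomp L R E N ch r B"
    and "t \<in> N" and "ch t = {t1, t2}" and "t1 \<noteq> t2"
    and "I \<subseteq> B t \<inter> R" and "Q \<subseteq> B t \<inter> L" and "d \<le> b"
  shows "(Q \<noteq> {} \<longrightarrow>
            ft L R E ch B t I Q d = Fjoin L R E ch B t t1 t2 I Q d
          \<and> gt L R E ch B t I Q d = Gjoin L R E ch B t t1 t2 I Q d)
       \<and> (Q = {} \<longrightarrow>
            ft L R E ch B t I Q d = min (Fjoin L R E ch B t t1 t2 I Q d)
                                      (min (ft L R E ch B t1 I Q d) (ft L R E ch B t2 I Q d))
          \<and> gt L R E ch B t I Q d =
              (if ft L R E ch B t I Q d = Fjoin L R E ch B t t1 t2 I Q d
               then Gjoin L R E ch B t t1 t2 I Q d else 0)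
            + (if ft L R E ch B t I Q d = ft L R E ch B t1 I Q d then gt L R E ch B t1 I Q d else 0)
            + (if ft L R E ch B t I Q d = ft L R E ch B t2 I Q d then gt L R E ch B t2 I Q d else 0))"
proof -
  note tg = assms(1)
  have rt: "rooted_tree N ch r" and td: "tree_decomp L R E N ch B"
    using assms(2) unfolding nice_tree_decomp_def by auto
  have tN: "t \<in> N" and ch: "ch t = {t1, t2}" and ne: "t1 \<noteq> t2" using assms by auto
  have "card (ch t) = 2" using ch ne by simp
  then have Bc: "B t1 = B t" "B t2 = B t" using assms(2) tN ch unfolding nice_tree_decomp_def by auto
  have t1N: "t1 \<in> N" "t2 \<in> N" using rt tN ch unfolding rooted_tree_def by auto
  define V1 where "V1 = Vt ch B t1"
  define V2 where "V2 = Vt ch B t2"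
  define Bt where "Bt = B t"
  have BV1: "Bt \<subseteq> V1" using Bc self_desc[of t1 ch] unfolding V1_def Bt_def Vt_def by auto
  have BV2: "Bt \<subseteq> V2" using Bc self_desc[of t2 ch] unfolding V2_def Bt_def Vt_def by auto
  have Vt_eq: "Vt ch B t = V1 \<union> V2"
    using rt_desc_join[of ch t t1 t2, OF ch] BV1 unfolding V1_def V2_def Bt_def Vt_def by auto
  have cap: "V1 \<inter> V2 = Bt" using child_sep[OF rt td tN ch ne] BV1 BV2 unfolding V1_def V2_def Bt_def by auto
  have fin1: "finite V1" "finite V2"
    using Vt_sub[OF rt td t1N(1)] Vt_sub[OF rt td t1N(2)] tg finite_subset
    unfolding V1_def V2_def tanner_graph_def by blast+
  have EL: "E \<subseteq> L \<times> R" "L \<inter> R = {}" using tg unfolding tanner_graph_def by auto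
  interpret J: jctx L R E V1 V2 Bt
  proof
    show "E \<subseteq> L \<times> R" "L \<inter> R = {}" "finite V1" "finite V2" "V1 \<inter> V2 = Bt" using EL fin1 cap by auto
    show "\<And>v c. (v, c) \<in> E \<Longrightarrow> c \<in> V1 \<Longrightarrow> c \<notin> Bt \<Longrightarrow> v \<in> V1"
      using child_edge[OF rt td tg tN] ch unfolding V1_def Bt_def by blast
    show "\<And>v c. (v, c) \<in> E \<Longrightarrow> c \<in> V2 \<Longrightarrow> c \<notin> Bt \<Longrightarrow> v \<in> V2"
      using child_edge[OF rt td tg tN] ch unfolding V2_def Bt_def by blast
  qed
  interpret J2: jctx L R E V2 V1 Bt by (rule jctx_swap) (rule J.jctx_axioms)
  have hp_t: "has_params L R E ch B t I' Q' d' S = hpA L R E (V1 \<union> V2) Bt I' Q' d' S" for I' Q' d' S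
    unfolding has_params_alt[OF tg] hpA_def Vt_eq Bt_def ..
  have hp_1: "has_params L R E ch B t1 I' Q' d' S = hpA L R E V1 Bt I' Q' d' S" for I' Q' d' S
    unfolding has_params_alt[OF tg] hpA_def V1_def Bt_def Bc ..
  have hp_2: "has_params L R E ch B t2 I' Q' d' S = hpA L R E V2 Bt I' Q' d' S" for I' Q' d' S
    unfolding has_params_alt[OF tg] hpA_def V2_def Bt_def Bc ..
  have ft_mm: "ft L R E ch B s I' Q' d' = mm {S. has_params L R E ch B s I' Q' d' S}" for s I' Q' d'
    unfolding ft_def mm_def by simp
  have gt_cn: "gt L R E ch B s I' Q' d' = cn {S. has_params L R E ch B s I' Q' d' S}" for s I' Q' d'
    unfolding gt_def cn_def ft_mm by simp
  have GQ: "odd_checks R (induced_on (Gt E ch B t) (Q \<union> (B t \<inter> R))) = OC R E (Bt \<inter> R) Q"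
  proof -
    have "Bt \<subseteq> V1 \<union> V2" using BV1 by auto
    from odd_checks_Q[OF tg _ this, of Q] show ?thesis
      unfolding Gt_eq Vt_eq Bt_def using assms(7) by simp
  qed
  have T_eq: "join_tuples R E ch B t I Q d = J.JT I Q d"
    unfolding join_tuples_def GQ J.JT_def by (simp add: Bt_def)
  define P1 where "P1 x = (case x of (I1, I2, d1, d2) \<Rightarrow> {S. hpA L R E V1 Bt I1 Q d1 S})" for x :: "'v set \<times> 'v set \<times> nat \<times> nat"
  define P2 where "P2 x = (case x of (I1, I2, d1, d2) \<Rightarrow> {S. hpA L R E V2 Bt I2 Q d2 S})" for x :: "'v set \<times> 'v set \<times> nat \<times> nat"
  define Jset where "Jset = (\<Union>x\<in>J.JT I Q d. (\<lambda>(A, B). A \<union> B) ` (P1 x \<times> P2 x))"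
  have jv: "join_val L R E ch B t1 t2 Q x = mm (P1 x) + mm (P2 x) - enat (card Q)" for x
    by (cases x) (simp add: join_val_def P1_def P2_def ft_mm hp_1 hp_2)
  have hpsub: "hpA L R E W Bt I' Q' d' S \<Longrightarrow> S \<subseteq> W" for W I' Q' d' S unfolding hpA_def by auto
  have finJT: "finite (J.JT I Q d)"
  proof (rule finite_subset)
    show "J.JT I Q d \<subseteq> Pow (Bt \<inter> R) \<times> Pow (Bt \<inter> R) \<times> {..d} \<times> {..d}" unfolding J.JT_def by auto
    show "finite (Pow (Bt \<inter> R) \<times> Pow (Bt \<inter> R) \<times> {..d} \<times> {..d})"
    proof -
      have "finite Bt" using finite_subset[OF BV1 fin1(1)] .
      then show ?thesis by simp
    qed
  qed
  have fP: "finite (P1 x) \<and> finite (P2 x)" if "x \<in> J.JT I Q d" for x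
  proof (rule conjI)
    have "P1 x \<subseteq> Pow V1" by (cases x) (auto simp: P1_def dest!: hpsub)
    then show "finite (P1 x)" using fin1 finite_subset by (metis finite_Pow_iff)
    have "P2 x \<subseteq> Pow V2" by (cases x) (auto simp: P2_def dest!: hpsub)
    then show "finite (P2 x)" using fin1 finite_subset by (metis finite_Pow_iff)
  qed
  have cadd: "card (S1 \<union> S2) + card Q = card S1 + card S2" if x: "x \<in> J.JT I Q d" and S: "S1 \<in> P1 x" "S2 \<in> P2 x" for x S1 S2
  proof -
    obtain I1 I2 d1 d2 where xx: "x = (I1, I2, d1, d2)" by (cases x)
    have h: "hpA L R E V1 Bt I1 Q d1 S1" "hpA L R E V2 Bt I2 Q d2 S2" using S unfolding xx P1_def P2_def by auto
    have f: "finite S1" "finite S2" using hpsub[OF h(1)] hpsub[OF h(2)] fin1 finite_subset by auto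
    show "card (S1 \<union> S2) + card Q = card S1 + card S2"
      using card_Un_Int[OF f] J.split_parts(3)[OF h] by simp
  qed
  have inj: "x = y \<and> S1 = S1' \<and> S2 = S2'" if x: "x \<in> J.JT I Q d" "y \<in> J.JT I Q d" and S: "S1 \<in> P1 x" "S2 \<in> P2 x" "S1' \<in> P1 y" "S2' \<in> P2 y" and e: "S1 \<union> S2 = S1' \<union> S2'" for x y S1 S2 S1' S2'
  proof -
    obtain I1 I2 d1 d2 where xx: "x = (I1, I2, d1, d2)" by (cases x)
    obtain I1' I2' d1' d2' where yy: "y = (I1', I2', d1', d2')" by (cases y)
    have h: "hpA L R E V1 Bt I1 Q d1 S1" "hpA L R E V2 Bt I2 Q d2 S2" using S unfolding xx P1_def P2_def by auto
    have h': "hpA L R E V1 Bt I1' Q d1' S1'" "hpA L R E V2 Bt I2' Q d2' S2'" using S unfolding yy P1_def P2_def by auto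
    have s1: "S1 = S1'" using J.split_parts(1)[OF h] J.split_parts(1)[OF h'] e by simp
    have s2: "S2 = S2'" using J.split_parts(2)[OF h] J.split_parts(2)[OF h'] e by simp
    have "I1 = I1'" "d1 = d1'" using h(1) h'(1) s1 unfolding hpA_def by auto
    moreover have "I2 = I2'" "d2 = d2'" using h(2) h'(2) s2 unfolding hpA_def by auto
    ultimately show "x = y \<and> S1 = S1' \<and> S2 = S2'" using xx yy s1 s2 by simp
  qed
  have JA: "mm Jset = (INF x\<in>J.JT I Q d. join_val L R E ch B t1 t2 Q x)"
     "cn Jset = (\<Sum>x\<in>{x \<in> J.JT I Q d. join_val L R E ch B t1 t2 Q x = (INF x\<in>J.JT I Q d. join_val L R E ch B t1 t2 Q x)}. cn (P1 x) * cn (P2 x))"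
     apply (rule join_abstract(1)[where T="J.JT I Q d" and ?P1.0=P1 and ?P2.0=P2 and k="card Q" and J=Jset
     and jv="join_val L R E ch B t1 t2 Q"])
          apply (rule finJT)
         apply (rule fP; assumption)
        apply (rule cadd; assumption)
       apply (rule inj; assumption)
      apply (rule Jset_def)
     apply (rule jv)
     apply (rule join_abstract(2)[where T="J.JT I Q d" and ?P1.0=P1 and ?P2.0=P2 and k="card Q" and J=Jset
     and jv="join_val L R E ch B t1 t2 Q"])
          apply (rule finJT)
         apply (rule fP; assumption)
        apply (rule cadd; assumption)
       apply (rule inj; assumption)
      apply (rule Jset_def)
     apply (rule jv)
    done
  have F_eq: "Fjoin L R E ch B t t1 t2 I Q d = mm Jset"
    unfolding Fjoin_def T_eq by (rule JA(1)[symmetric])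
  have G_eq: "Gjoin L R E ch B t t1 t2 I Q d = cn Jset"
  proof -
    have "Gjoin L R E ch B t t1 t2 I Q d = (\<Sum>x\<in>{x\<in>J.JT I Q d. join_val L R E ch B t1 t2 Q x = mm Jset}.
        (case x of (I1, I2, d1, d2) \<Rightarrow> gt L R E ch B t1 I1 Q d1 * gt L R E ch B t2 I2 Q d2))"
      unfolding Gjoin_def F_eq T_eq ..
    also have "\<dots> = (\<Sum>x\<in>{x\<in>J.JT I Q d. join_val L R E ch B t1 t2 Q x = mm Jset}. cn (P1 x) * cn (P2 x))"
    proof (rule sum.cong[OF refl])
      fix x :: "'v set \<times> 'v set \<times> nat \<times> nat"
      obtain I1 I2 d1 d2 where xx: "x = (I1, I2, d1, d2)" by (cases x)
      show "(case x of (I1, I2, d1, d2) \<Rightarrow> gt L R E ch B t1 I1 Q d1 * gt L R E ch B t2 I2 Q d2) = cn (P1 x) * cn (P2 x)"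
        unfolding xx P1_def P2_def gt_cn hp_1 hp_2 by simp
    qed
    also have "\<dots> = cn Jset" unfolding JA(2) JA(1)[symmetric] ..
    finally show ?thesis .
  qed
  have Jset_eq: "Jset = {S. hpA L R E (V1 \<union> V2) Bt I Q d S \<and> S \<inter> V1 \<noteq> {} \<and> S \<inter> V2 \<noteq> {}}"
  proof -
    have a: "S \<in> Jset \<longleftrightarrow> (\<exists>x\<in>J.JT I Q d. \<exists>S1 S2. S1 \<in> P1 x \<and> S2 \<in> P2 x \<and> S = S1 \<union> S2)" for S
      unfolding Jset_def by auto
    have b: "(\<exists>x\<in>J.JT I Q d. \<exists>S1 S2. S1 \<in> P1 x \<and> S2 \<in> P2 x \<and> S = S1 \<union> S2) \<longleftrightarrow>
      (\<exists>I1 I2 d1 d2 S1 S2. (I1, I2, d1, d2) \<in> J.JT I Q d \<and> hpA L R E V1 Bt I1 Q d1 S1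
       \<and> hpA L R E V2 Bt I2 Q d2 S2 \<and> S = S1 \<union> S2)" for S
    proof
      assume "\<exists>x\<in>J.JT I Q d. \<exists>S1 S2. S1 \<in> P1 x \<and> S2 \<in> P2 x \<and> S = S1 \<union> S2"
      then obtain x S1 S2 where x: "x \<in> J.JT I Q d" "S1 \<in> P1 x" "S2 \<in> P2 x" "S = S1 \<union> S2" by blast
      obtain I1 I2 d1 d2 where xx: "x = (I1, I2, d1, d2)" by (cases x)
      show "\<exists>I1 I2 d1 d2 S1 S2. (I1, I2, d1, d2) \<in> J.JT I Q d \<and> hpA L R E V1 Bt I1 Q d1 S1
       \<and> hpA L R E V2 Bt I2 Q d2 S2 \<and> S = S1 \<union> S2"
      proof (intro exI conjI)
        show "(I1, I2, d1, d2) \<in> J.JT I Q d" using x(1) xx by simp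
        show "hpA L R E V1 Bt I1 Q d1 S1" using x(2) xx unfolding P1_def by simp
        show "hpA L R E V2 Bt I2 Q d2 S2" using x(3) xx unfolding P2_def by simp
        show "S = S1 \<union> S2" by (rule x(4))
      qed
    next
      assume "\<exists>I1 I2 d1 d2 S1 S2. (I1, I2, d1, d2) \<in> J.JT I Q d \<and> hpA L R E V1 Bt I1 Q d1 S1
       \<and> hpA L R E V2 Bt I2 Q d2 S2 \<and> S = S1 \<union> S2"
      then obtain I1 I2 d1 d2 S1 S2 where y: "(I1, I2, d1, d2) \<in> J.JT I Q d" "hpA L R E V1 Bt I1 Q d1 S1"
        "hpA L R E V2 Bt I2 Q d2 S2" "S = S1 \<union> S2" by blast
      have "S1 \<in> P1 (I1, I2, d1, d2)" "S2 \<in> P2 (I1, I2, d1, d2)" using y unfolding P1_def P2_def by auto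
      then show "\<exists>x\<in>J.JT I Q d. \<exists>S1 S2. S1 \<in> P1 x \<and> S2 \<in> P2 x \<and> S = S1 \<union> S2" using y by blast
    qed
    show ?thesis
    proof (rule set_eqI)
      fix S
      show "S \<in> Jset \<longleftrightarrow> S \<in> {S. hpA L R E (V1 \<union> V2) Bt I Q d S \<and> S \<inter> V1 \<noteq> {} \<and> S \<inter> V2 \<noteq> {}}"
        unfolding a b J.J_char by simp
    qed
  qed
  have ftt: "ft L R E ch B t I Q d = mm {S. hpA L R E (V1 \<union> V2) Bt I Q d S}"
    unfolding ft_mm hp_t ..
  have gtt: "gt L R E ch B t I Q d = cn {S. hpA L R E (V1 \<union> V2) Bt I Q d S}"
    unfolding gt_cn hp_t ..
  show ?thesis
  proof (intro conjI impI)
    assume Qne: "Q \<noteq> {}"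
    have "{S. hpA L R E (V1 \<union> V2) Bt I Q d S} = Jset"
    proof -
      have "S \<inter> V1 \<noteq> {} \<and> S \<inter> V2 \<noteq> {}" if "hpA L R E (V1 \<union> V2) Bt I Q d S" for S
        using that Qne BV1 BV2 unfolding hpA_def by blast
      then show ?thesis unfolding Jset_eq by blast
    qed
    then show "ft L R E ch B t I Q d = Fjoin L R E ch B t t1 t2 I Q d"
      "gt L R E ch B t I Q d = Gjoin L R E ch B t t1 t2 I Q d"
      unfolding ftt gtt F_eq G_eq by simp_all
  next
    assume Qe: "Q = {}"
    define A1 where "A1 = {S. hpA L R E V1 Bt I {} d S}"
    define A2 where "A2 = {S. hpA L R E V2 Bt I {} d S}"
    have A1_eq: "A1 = {S. hpA L R E (V1 \<union> V2) Bt I {} d S \<and> S \<inter> V2 = {}}"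
      unfolding A1_def using J.one_side1 by blast
    have A2_eq: "A2 = {S. hpA L R E (V1 \<union> V2) Bt I {} d S \<and> S \<inter> V1 = {}}"
      unfolding A2_def using J2.one_side1 by (auto simp: Un_commute)
    have all: "{S. hpA L R E (V1 \<union> V2) Bt I Q d S} = Jset \<union> A1 \<union> A2"
      unfolding Jset_eq A1_eq A2_eq Qe by blast
    have finP: "finite {S. hpA L R E (V1 \<union> V2) Bt I Q d S}"
    proof (rule finite_subset[of _ "Pow (V1 \<union> V2)"])
      show "{S. hpA L R E (V1 \<union> V2) Bt I Q d S} \<subseteq> Pow (V1 \<union> V2)" by (auto dest!: hpsub)
      show "finite (Pow (V1 \<union> V2))" using fin1 by simp
    qed
    have fins: "finite Jset" "finite A1" "finite A2" using finP unfolding all by auto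
    have disj: "Jset \<inter> A1 = {}" "Jset \<inter> A2 = {}" "A1 \<inter> A2 = {}"
    proof -
      have ne: "False" if "hpA L R E (V1 \<union> V2) Bt I {} d S" "S \<inter> V1 = {}" "S \<inter> V2 = {}" for S
      proof -
        have "S \<subseteq> V1 \<union> V2" using hpsub[OF that(1)] .
        then have "S = {}" using that(2,3) by blast
        then show False using that(1) unfolding hpA_def by simp
      qed
      show "Jset \<inter> A1 = {}" "Jset \<inter> A2 = {}" unfolding Jset_eq A1_eq A2_eq by blast+
      show "A1 \<inter> A2 = {}" unfolding A1_eq A2_eq using ne by blast
    qed
    have ft1: "ft L R E ch B t1 I Q d = mm A1" unfolding ft_mm hp_1 A1_def Qe ..
    have ft2: "ft L R E ch B t2 I Q d = mm A2" unfolding ft_mm hp_2 A2_def Qe ..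
    have gt1: "gt L R E ch B t1 I Q d = cn A1" unfolding gt_cn hp_1 A1_def Qe ..
    have gt2: "gt L R E ch B t2 I Q d = cn A2" unfolding gt_cn hp_2 A2_def Qe ..
    note u3 = cn_union3[OF fins disj]
    show "ft L R E ch B t I Q d = min (Fjoin L R E ch B t t1 t2 I Q d)
                                      (min (ft L R E ch B t1 I Q d) (ft L R E ch B t2 I Q d))"
      unfolding ftt all ft1 ft2 F_eq by (rule u3(1))
    show "gt L R E ch B t I Q d =
              (if ft L R E ch B t I Q d = Fjoin L R E ch B t t1 t2 I Q d
               then Gjoin L R E ch B t t1 t2 I Q d else 0)
            + (if ft L R E ch B t I Q d = ft L R E ch B t1 I Q d then gt L R E ch B t1 I Q d else 0)
            + (if ft L R E ch B t I Q d = ft L R E ch B t2 I Q d then gt L R E ch B t2 I Q d else 0)"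
      unfolding gtt ftt all ft1 ft2 gt1 gt2 F_eq G_eq by (rule u3(2))
  qed
qed

end
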